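(* Let $\xi$ and $\eta_j$ be even unimodal probability densities on $\mathbb R$, $n>0$, $\nu_j>0$, and for $i=0,1$ let $I_{ij}(d)=\int_{-\infty}^\infty x^i\sqrt n\,\eta_j(\sqrt n(x-d))\,\nu_j\xi(\nu_jx)\,dx$. If $|I_{1j}(d)|<\infty$ for all $j$ and $d$, then $|I_{1j}(d)/I_{0j}(d)|\le|d|$ for all $j$ and all real $d$.
   Context: A density is unimodal (and even) here if it is symmetric about $0$ and nonincreasing on $[0,\infty)$. *)

theory Defs
  imports "HOL-Analysis.Analysis"
begin

definition prob_density :: "(real \<Rightarrow> real) \<Rightarrow> bool" where
  "prob_density f \<longleftrightarrow> f \<in> borel_measurable lborel \<and> (\<forall>x. 0 \<le> f x)
     \<and> integrable lborel f \<and> integral\<^sup>L lborel f = 1"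

definition even_unimodal :: "(real \<Rightarrow> real) \<Rightarrow> bool" where
  "even_unimodal f \<longleftrightarrow> (\<forall>x. f (- x) = f x) \<and> (\<forall>x y. 0 \<le> x \<longrightarrow> x \<le> y \<longrightarrow> f y \<le> f x)"

definition Iintegrand :: "nat \<Rightarrow> real \<Rightarrow> (real \<Rightarrow> real) \<Rightarrow> (real \<Rightarrow> real) \<Rightarrow> real \<Rightarrow> real \<Rightarrow> real \<Rightarrow> real" where
  "Iintegrand i n \<xi> \<eta> \<nu> d x = x ^ i * sqrt n * \<eta> (sqrt n * (x - d)) * \<nu> * \<xi> (\<nu> * x)"

definition Iint :: "nat \<Rightarrow> real \<Rightarrow> (real \<Rightarrow> real) \<Rightarrow> (real \<Rightarrow> real) \<Rightarrow> real \<Rightarrow> real \<Rightarrow> real" where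
  "Iint i n \<xi> \<eta> \<nu> d = (\<integral>x. Iintegrand i n \<xi> \<eta> \<nu> d x \<partial>lborel)"

end

theory Submission
  imports Defs
begin

lemma reflect_integral:
  fixes h :: "real \<Rightarrow> real"
  assumes h: "integrable lborel h"
  shows "2 * integral\<^sup>L lborel h = (\<integral>x. h x + h (t - x) \<partial>lborel)"
proof -
  have i2: "integrable lborel (\<lambda>x. h (t + (-1) * x))"
    using lborel_integrable_real_affine[OF h, of "-1" t] by simp
  have e: "integral\<^sup>L lborel h = (\<integral>x. h (t + (-1) * x) \<partial>lborel)"
    using lborel_integral_real_affine[of "-1" h t] by simp
  have "(\<integral>x. h x + h (t - x) \<partial>lborel) = integral\<^sup>L lborel h + (\<integral>x. h (t + (-1) * x) \<partial>lborel)"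
    using Bochner_Integration.integral_add[OF h i2] by simp
  with e show ?thesis by simp
qed

lemma eu_mono:
  assumes "even_unimodal h" "\<bar>a\<bar> \<le> \<bar>b\<bar>"
  shows "h b \<le> h a"
proof -
  have s: "\<And>x. h x = h \<bar>x\<bar>" using assms(1) unfolding even_unimodal_def
    by (metis abs_of_nonneg abs_of_nonpos linorder_le_cases)
  have "h \<bar>b\<bar> \<le> h \<bar>a\<bar>" using assms unfolding even_unimodal_def by simp
  with s show ?thesis by metis
qed

lemma eu_bound:
  assumes "even_unimodal h" shows "h x \<le> h 0"
  using eu_mono[OF assms, of 0 x] by simp

lemma final:
  fixes I0 I1 d :: real
  assumes I0nn: "I0 \<ge> 0" and dI1: "0 \<le> d * I1" and dI2: "d * (I1 - d * I0) \<le> 0" and d0: "d = 0 \<Longrightarrow> I1 = 0"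
  shows "\<bar>I1 / I0\<bar> \<le> \<bar>d\<bar>"
proof (cases "I0 = 0")
  case True thus ?thesis by simp
next
  case False
  hence I0p: "I0 > 0" using I0nn by simp
  have "\<bar>I1\<bar> \<le> \<bar>d\<bar> * I0"
  proof (cases d "0::real" rule: linorder_cases)
    case less
    have "I1 \<le> 0" using dI1 less by (metis linorder_not_le mult_neg_pos)
    moreover have "I1 - d * I0 \<ge> 0" using dI2 less by (metis linorder_not_le mult_neg_neg)
    ultimately show ?thesis using less by linarith
  next
    case equal thus ?thesis using d0 by simp
  next
    case greater
    have "I1 \<ge> 0" using dI1 greater by (metis linorder_not_le mult_pos_neg)
    moreover have "I1 - d * I0 \<le> 0" using dI2 greater by (metis linorder_not_le mult_pos_pos)
    ultimately show ?thesis using greater by linarith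
  qed
  thus ?thesis using I0p by (simp add: abs_divide pos_divide_le_eq)
qed

theorem lemma1:
  fixes \<xi> :: "real \<Rightarrow> real" and \<eta> :: "'j \<Rightarrow> real \<Rightarrow> real" and \<nu> :: "'j \<Rightarrow> real" and n :: real
  assumes "prob_density \<xi>" and "even_unimodal \<xi>"
    and "\<And>j. prob_density (\<eta> j)" and "\<And>j. even_unimodal (\<eta> j)"
    and "n > 0" and "\<And>j. \<nu> j > 0"
    and "\<And>j d. integrable lborel (Iintegrand 1 n \<xi> (\<eta> j) (\<nu> j) d)"
  shows "\<forall>j d. \<bar>Iint 1 n \<xi> (\<eta> j) (\<nu> j) d / Iint 0 n \<xi> (\<eta> j) (\<nu> j) d\<bar> \<le> \<bar>d\<bar>"
proof (intro allI)
  fix j d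
  define e where "e = \<eta> j"
  define v where "v = \<nu> j"
  define s where "s = sqrt n"
  have v: "v > 0" using assms(6) v_def by simp
  have s: "s > 0" using assms(5) s_def by simp
  have pe: "prob_density e" and ue: "even_unimodal e" using assms(3,4) e_def by auto
  have px: "prob_density \<xi>" and ux: "even_unimodal \<xi>" using assms(1,2) by auto
  have em[measurable]: "e \<in> borel_measurable borel" using pe unfolding prob_density_def by simp
  have xm[measurable]: "\<xi> \<in> borel_measurable borel" using px unfolding prob_density_def by simp
  have enn: "\<And>x. 0 \<le> e x" and xnn: "\<And>x. 0 \<le> \<xi> x" using pe px unfolding prob_density_def by auto
  define A where "A = Iintegrand 1 n \<xi> (\<eta> j) (\<nu> j) d"
  define B where "B = Iintegrand 0 n \<xi> (\<eta> j) (\<nu> j) d"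
  have A: "\<And>x. A x = x * s * e (s * (x - d)) * v * \<xi> (v * x)"
    unfolding A_def Iintegrand_def s_def e_def v_def by simp
  have B: "\<And>x. B x = s * e (s * (x - d)) * v * \<xi> (v * x)"
    unfolding B_def Iintegrand_def s_def e_def v_def by simp
  have Ai: "integrable lborel A" unfolding A_def by (rule assms(7))
  have xi: "integrable lborel (\<lambda>x. \<xi> (0 + v * x))"
    using lborel_integrable_real_affine[of \<xi> v 0] px v unfolding prob_density_def by simp
  have Bi: "integrable lborel B"
  proof (rule Bochner_Integration.integrable_bound[where f="\<lambda>x. (s * e 0 * v) * \<xi> (0 + v * x)"])
    show "integrable lborel (\<lambda>x. (s * e 0 * v) * \<xi> (0 + v * x))"
      using xi by simp
    show "B \<in> borel_measurable lborel" unfolding B by measurable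
    show "AE x in lborel. norm (B x) \<le> norm ((s * e 0 * v) * \<xi> (0 + v * x))"
    proof (intro AE_I2)
      fix x
      have "e (s * (x - d)) \<le> e 0" by (rule eu_bound[OF ue])
      hence "s * e (s * (x - d)) * v * \<xi> (v * x) \<le> s * e 0 * v * \<xi> (v * x)"
        using s v xnn by (simp add: mult_right_mono)
      thus "norm (B x) \<le> norm ((s * e 0 * v) * \<xi> (0 + v * x))"
        using s v xnn enn B by simp
    qed
  qed
  define I1 where "I1 = integral\<^sup>L lborel A"
  define I0 where "I0 = integral\<^sup>L lborel B"
  have I0nn: "I0 \<ge> 0" unfolding I0_def B using s v xnn enn by (intro Bochner_Integration.integral_nonneg) simp
  have r1: "2 * I1 = (\<integral>x. A x + A (0 - x) \<partial>lborel)"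
    unfolding I1_def by (rule reflect_integral[OF Ai])
  have p1: "d * (A x + A (0 - x)) \<ge> 0" for x
  proof -
    have xe: "\<xi> (v * (0 - x)) = \<xi> (v * x)" using ux unfolding even_unimodal_def
      by (metis minus_mult_right diff_0)
    have ee: "e (s * ((0 - x) - d)) = e (s * (x + d))" using ue unfolding even_unimodal_def
      by (metis minus_diff_eq minus_mult_right diff_0 diff_minus_eq_add add.commute)
    have key: "d * x * (e (s * (x - d)) - e (s * (x + d))) \<ge> 0"
    proof (cases "d * x \<ge> 0")
      case True
      have q: "(s * (x + d))\<^sup>2 - (s * (x - d))\<^sup>2 = 4 * (s * s) * (d * x)"
        by (simp add: power2_eq_square algebra_simps)
      have "\<bar>s * (x - d)\<bar> \<le> \<bar>s * (x + d)\<bar>"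
        unfolding abs_le_square_iff
      proof -
        have "0 \<le> 4 * (s * s) * (d * x)" using True by simp
        thus "(s * (x - d))\<^sup>2 \<le> (s * (x + d))\<^sup>2" using q by linarith
      qed
      hence "e (s * (x + d)) \<le> e (s * (x - d))" by (rule eu_mono[OF ue])
      thus ?thesis using True by simp
    next
      case False
      have q: "(s * (x + d))\<^sup>2 - (s * (x - d))\<^sup>2 = 4 * (s * s) * (d * x)"
        by (simp add: power2_eq_square algebra_simps)
      have "4 * (s * s) * (d * x) \<le> 0" using False s by (simp add: mult_nonneg_nonpos)
      hence "\<bar>s * (x + d)\<bar> \<le> \<bar>s * (x - d)\<bar>"
        unfolding abs_le_square_iff using q by linarith
      hence "e (s * (x - d)) \<le> e (s * (x + d))" by (rule eu_mono[OF ue])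
      thus ?thesis using False by (simp add: mult_nonpos_nonpos)
    qed
    have "d * (A x + A (0 - x)) = (d * x * (e (s * (x - d)) - e (s * (x + d)))) * (s * v * \<xi> (v * x))"
      unfolding A xe ee by (simp add: algebra_simps)
    also have "\<dots> \<ge> 0" using key s v xnn by simp
    finally show ?thesis .
  qed
  have dI1: "d * I1 \<ge> 0"
  proof -
    have "0 \<le> (\<integral>x. d * (A x + A (0 - x)) \<partial>lborel)" using p1 by (intro Bochner_Integration.integral_nonneg) simp
    also have "\<dots> = d * (2 * I1)" unfolding r1 by simp
    finally show ?thesis by (simp add: mult.commute)
  qed
  have d0: "d = 0 \<Longrightarrow> I1 = 0"
  proof -
    assume d: "d = 0"
    have "A x + A (0 - x) = 0" for x
    proof -
      have xe: "\<xi> (v * (0 - x)) = \<xi> (v * x)" using ux unfolding even_unimodal_def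
        by (metis minus_mult_right diff_0)
      have ee: "e (s * ((0 - x) - 0)) = e (s * (x - 0))" using ue unfolding even_unimodal_def
        by (metis minus_mult_right diff_0 diff_zero)
      show ?thesis unfolding A d xe ee by (simp add: algebra_simps)
    qed
    thus ?thesis using r1 by simp
  qed
  define C where "C = (\<lambda>x. A x - d * B x)"
  have Ci: "integrable lborel C" unfolding C_def using Ai Bi by simp
  have IC: "integral\<^sup>L lborel C = I1 - d * I0"
    unfolding C_def I1_def I0_def using Ai Bi by simp
  have r2: "2 * (I1 - d * I0) = (\<integral>x. C x + C (2 * d - x) \<partial>lborel)"
    using reflect_integral[OF Ci, of "2 * d"] IC by simp
  have p2: "d * (C x + C (2 * d - x)) \<le> 0" for x
  proof -
    have ee: "e (s * ((2 * d - x) - d)) = e (s * (x - d))" using ue unfolding even_unimodal_def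
      by (metis minus_diff_eq minus_mult_right diff_diff_eq2 mult_2 add_diff_cancel_left' diff_add_eq)
    have key: "d * (x - d) * (\<xi> (v * x) - \<xi> (v * (2 * d - x))) \<le> 0"
    proof (cases "d * (x - d) \<ge> 0")
      case True
      have q: "(v * x)\<^sup>2 - (v * (2 * d - x))\<^sup>2 = 4 * (v * v) * (d * (x - d))"
        by (simp add: power2_eq_square algebra_simps)
      have "\<bar>v * (2 * d - x)\<bar> \<le> \<bar>v * x\<bar>"
        unfolding abs_le_square_iff
      proof -
        have "0 \<le> 4 * (v * v) * (d * (x - d))" using True by simp
        thus "(v * (2 * d - x))\<^sup>2 \<le> (v * x)\<^sup>2" using q by linarith
      qed
      hence "\<xi> (v * x) \<le> \<xi> (v * (2 * d - x))" by (rule eu_mono[OF ux])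
      thus ?thesis using True by (simp add: mult_nonneg_nonpos)
    next
      case False
      have q: "(v * x)\<^sup>2 - (v * (2 * d - x))\<^sup>2 = 4 * (v * v) * (d * (x - d))"
        by (simp add: power2_eq_square algebra_simps)
      have "4 * (v * v) * (d * (x - d)) \<le> 0" using False v by (simp add: mult_nonneg_nonpos)
      hence "\<bar>v * x\<bar> \<le> \<bar>v * (2 * d - x)\<bar>"
        unfolding abs_le_square_iff using q by linarith
      hence "\<xi> (v * (2 * d - x)) \<le> \<xi> (v * x)" by (rule eu_mono[OF ux])
      thus ?thesis using False by (simp add: mult_nonpos_nonneg)
    qed
    have "d * (C x + C (2 * d - x)) = (d * (x - d) * (\<xi> (v * x) - \<xi> (v * (2 * d - x)))) * (s * v * e (s * (x - d)))"
      unfolding C_def A B ee by (simp add: algebra_simps)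
    also have "\<dots> \<le> 0" using key s v enn by (simp add: mult_nonpos_nonneg)
    finally show ?thesis .
  qed
  have dI2: "d * (I1 - d * I0) \<le> 0"
  proof -
    have "0 \<le> (\<integral>x. - (d * (C x + C (2 * d - x))) \<partial>lborel)" using p2
      by (intro Bochner_Integration.integral_nonneg) simp
    hence "(\<integral>x. d * (C x + C (2 * d - x)) \<partial>lborel) \<le> 0" by simp
    moreover have "(\<integral>x. d * (C x + C (2 * d - x)) \<partial>lborel) = d * (2 * (I1 - d * I0))" unfolding r2 by simp
    moreover have "d * (2 * (I1 - d * I0)) = 2 * (d * (I1 - d * I0))" by (simp only: mult.left_commute)
    ultimately show ?thesis by linarith
  qed
  have main: "\<bar>I1 / I0\<bar> \<le> \<bar>d\<bar>" by (rule final[OF I0nn dI1 dI2 d0])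
  show "\<bar>Iint 1 n \<xi> (\<eta> j) (\<nu> j) d / Iint 0 n \<xi> (\<eta> j) (\<nu> j) d\<bar> \<le> \<bar>d\<bar>"
    using main unfolding Iint_def I1_def I0_def A_def B_def .
qed

end
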